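(* For $\tau$ in the upper half plane, with $q^s=e^{2\pi i s\tau}$ and $\eta=\eta(\tau)$: $$\theta_3(0|6\tau)\theta_3(\tau|6\tau)-\theta_2(0|6\tau)\theta_2(\tau|6\tau)=q^{-1/12}\eta^2,$$ $$\theta_3(0|\tfrac{\tau}{6})\theta_3(\tfrac16|\tfrac{\tau}{6})-\theta_4(0|\tfrac{\tau}{6})\theta_4(\tfrac16|\tfrac{\tau}{6})=6\eta^2,$$ $$\theta_3(0|\tfrac{2\tau}{3})\theta_2(\tfrac13|\tfrac{2\tau}{3})+\theta_2(0|\tfrac{2\tau}{3})\theta_3(\tfrac13|\tfrac{2\tau}{3})=3\eta^2,$$ $$\theta_3(0|\tfrac{3\tau}{2})\theta_4(\tau|\tfrac{3\tau}{2})-\theta_4(0|\tfrac{3\tau}{2})\theta_3(\tau|\tfrac{3\tau}{2})=-2q^{-1/3}\eta^2.$$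
   Context: With $q^s=e^{2\pi i s\tau}$, $y^s=e^{2\pi i s z}$: $\theta_2(z|\tau)=\sum_{n\in\mathbb{Z}} q^{(n+1/2)^2/2}y^{n+1/2}$, $\theta_3(z|\tau)=\sum_{n} q^{n^2/2}y^{n}$, $\theta_4(z|\tau)=\sum_{n}(-1)^n q^{n^2/2}y^{n}$; $\eta(\tau)=q^{1/24}\prod_{n\ge1}(1-q^n)$. *)

theory Defs
  imports "HOL-Analysis.Analysis"
begin

definition qpow :: "real \<Rightarrow> complex \<Rightarrow> complex" where
  "qpow s \<tau> = exp (2 * of_real pi * \<i> * of_real s * \<tau>)"

definition theta2 :: "complex \<Rightarrow> complex \<Rightarrow> complex" where
  "theta2 z \<tau> = (\<Sum>\<^sub>\<infinity> n::int. qpow ((real_of_int n + 1/2)^2 / 2) \<tau> * qpow (real_of_int n + 1/2) z)"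

definition theta3 :: "complex \<Rightarrow> complex \<Rightarrow> complex" where
  "theta3 z \<tau> = (\<Sum>\<^sub>\<infinity> n::int. qpow ((real_of_int n)^2 / 2) \<tau> * qpow (real_of_int n) z)"

definition theta4 :: "complex \<Rightarrow> complex \<Rightarrow> complex" where
  "theta4 z \<tau> = (\<Sum>\<^sub>\<infinity> n::int. (-1) powi n * qpow ((real_of_int n)^2 / 2) \<tau> * qpow (real_of_int n) z)"

definition dedekind_eta :: "complex \<Rightarrow> complex" where
  "dedekind_eta \<tau> = qpow (1/24) \<tau> * (\<Prod>n. (1 - qpow (real (Suc n)) \<tau>))"

end

theory Submission
  imports Defs
begin

definition tri :: "nat \<Rightarrow> nat" where "tri k = k * (k + 1) div 2"

lemma tri_0 [simp]: "tri 0 = 0" by (simp add: tri_def)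
lemma tri_Suc [simp]: "tri (Suc k) = tri k + Suc k"
  unfolding tri_def by (induction k) auto

definition Tp :: "complex \<Rightarrow> nat \<Rightarrow> nat \<Rightarrow> complex" where
  "Tp x n k = (\<Prod>i\<in>{Suc k..n}. (1 - x ^ i))"

definition Ash :: "complex \<Rightarrow> nat \<Rightarrow> nat \<Rightarrow> complex" where
  "Ash x n m = (\<Sum>k\<le>n. (-1) ^ k * x ^ (m * k + tri k) * Tp x n k)"

lemma Tp_Suc: "k \<le> n \<Longrightarrow> Tp x (Suc n) k = Tp x n k * (1 - x ^ Suc n)"
  unfolding Tp_def by (subst prod.nat_ivl_Suc') auto

lemma Tp_same [simp]: "Tp x n n = 1"
  unfolding Tp_def by simp

lemma Ash_R1: "Ash x (Suc n) m = (1 - x ^ Suc n) * Ash x n m + (-1) ^ Suc n * x ^ (m * Suc n + tri (Suc n))"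
proof -
  have "Ash x (Suc n) m = (\<Sum>k\<le>n. (-1) ^ k * x ^ (m * k + tri k) * Tp x (Suc n) k)
        + (-1) ^ Suc n * x ^ (m * Suc n + tri (Suc n))"
    unfolding Ash_def by simp
  also have "(\<Sum>k\<le>n. (-1) ^ k * x ^ (m * k + tri k) * Tp x (Suc n) k) = (1 - x ^ Suc n) * Ash x n m"
    unfolding Ash_def sum_distrib_left
    by (intro sum.cong) (auto simp: Tp_Suc)
  finally show ?thesis .
qed

lemma Ash_0 [simp]: "Ash x 0 m = 1"
  unfolding Ash_def by simp

lemma lin2_aux: "(1 - a) * ((1 - b) * Z + (-1) ^ n * pe) + (-1) ^ Suc n * pe
   = (1 - b) * ((1 - a) * Z + (-1) ^ Suc n * (pe * a)) + (-1) ^ Suc n * (pe * a * b)" for a b Z pe :: complex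
  by (simp add: algebra_simps)

lemma Ash_R2: "Ash x n m = (1 - x ^ Suc m) * Ash x n (Suc m) + (-1) ^ n * x ^ (Suc m * Suc n + tri n)"
proof (induction n arbitrary: m)
  case 0
  then show ?case by simp
next
  case (Suc n)
  define T where "T = tri n"
  define e where "e = Suc m * Suc n + T"
  have e1: "m * Suc n + tri (Suc n) = e" by (simp add: e_def T_def)
  have e2: "Suc m * Suc n + tri n = e" by (simp add: e_def T_def)
  have e3: "Suc m * Suc n + tri (Suc n) = e + Suc n" by (simp add: e_def T_def)
  have e4: "Suc m * Suc (Suc n) + tri (Suc n) = e + Suc n + Suc m" by (simp add: e_def T_def)
  have "Ash x (Suc n) m = (1 - x ^ Suc n) * ((1 - x ^ Suc m) * Ash x n (Suc m) + (-1) ^ n * x ^ e)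
        + (-1) ^ Suc n * x ^ e"
    unfolding Ash_R1 by (subst Suc.IH[of m]) (simp only: e1 e2)
  also have "\<dots> = (1 - x ^ Suc m) * ((1 - x ^ Suc n) * Ash x n (Suc m) + (-1) ^ Suc n * x ^ (e + Suc n))
        + (-1) ^ Suc n * x ^ (e + Suc n + Suc m)"
    by (simp only: power_add lin2_aux)
  also have "\<dots> = (1 - x ^ Suc m) * Ash x (Suc n) (Suc m) + (-1) ^ Suc n * x ^ (Suc m * Suc (Suc n) + tri (Suc n))"
    by (simp only: Ash_R1 e3 e4)
  finally show ?case .
qed

lemma lin_aux: "(A2::complex) = c * Y + (-1) ^ Suc n * p1 \<Longrightarrow> A1 = c * Y + (-1) ^ n * p2 \<Longrightarrow> A2 = A1 + (-1) ^ Suc n * (p1 + p2)"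
  by (simp add: algebra_simps)

lemma Shanks: "Ash x (Suc n) (Suc n) = Ash x n n + (-1) ^ Suc n * (x ^ (Suc n * Suc n + tri (Suc n)) + x ^ (Suc n * Suc n + tri n))"
  by (rule lin_aux[OF Ash_R1 Ash_R2])



definition NN :: "real \<Rightarrow> real \<Rightarrow> complex \<Rightarrow> complex" where
  "NN a b t = qpow a 1 * qpow b t"

lemma qpow_add: "qpow a t * qpow b t = qpow (a + b) t"
  unfolding qpow_def exp_add[symmetric] by (simp add: algebra_simps)

lemma NN_mult: "NN a b t * NN c d t = NN (a + c) (b + d) t"
  unfolding NN_def qpow_add[symmetric] by (simp only: mult_ac)

lemma qpow_int1: "qpow (of_int k) 1 = 1"
proof -
  have "2 * complex_of_real pi * \<i> * complex_of_real (of_int k) * 1 = \<i> * (of_int k * (of_real pi * 2))"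
    by simp
  then show ?thesis unfolding qpow_def by (simp only: exp_2pi_1_int)
qed

lemma qpow_half1: "qpow (1/2) 1 = -1"
proof -
  have "2 * complex_of_real pi * \<i> * complex_of_real (1/2) * 1 = of_real pi * \<i>"
    by simp
  then show ?thesis unfolding qpow_def by simp
qed

lemma qpow1_shift: "a = a' + of_int k \<Longrightarrow> qpow a 1 = qpow a' 1"
  by (simp add: qpow_add[symmetric] qpow_int1)

lemma qpow1_shift_half: "a = a' + of_int k + 1/2 \<Longrightarrow> qpow a 1 = - qpow a' 1"
  by (simp add: qpow_add[symmetric] qpow_int1 qpow_half1)

lemma NN_int: "b = b' \<Longrightarrow> a = a' + of_int k \<Longrightarrow> NN a b t = NN a' b' t"
  unfolding NN_def by (simp add: qpow1_shift)

lemma NN_half: "b = b' \<Longrightarrow> a = a' + of_int k + 1/2 \<Longrightarrow> NN a b t = - NN a' b' t"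
  unfolding NN_def by (simp add: qpow1_shift_half)

lemma norm_qpow: "norm (qpow a t) = exp (- 2 * pi * a * Im t)"
  unfolding qpow_def by simp

lemma norm_NN: "norm (NN a b t) = exp (- 2 * pi * b * Im t)"
  unfolding NN_def norm_mult norm_qpow by simp

lemma qpow_nat: "qpow (real m) t = qpow 1 t ^ m"
proof -
  have "qpow (real m) t = exp (of_nat m * (2 * of_real pi * \<i> * t))"
    unfolding qpow_def by (simp add: algebra_simps)
  also have "\<dots> = qpow 1 t ^ m" by (simp add: exp_of_nat_mult qpow_def)
  finally show ?thesis .
qed

lemma qpow_nat_half: "qpow (real k / 2) 1 = (-1) ^ k"
proof -
  have "qpow (real k / 2) 1 = exp (of_nat k * (of_real pi * \<i>))"
    unfolding qpow_def by (simp add: algebra_simps)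
  also have "\<dots> = (-1) ^ k" by (simp add: exp_of_nat_mult)
  finally show ?thesis .
qed

lemma norm_q: "Im t > 0 \<Longrightarrow> norm (qpow 1 t) < 1"
  unfolding norm_qpow by simp

lemma real_tri: "real (tri n) = real n * (real n + 1) / 2"
  by (induction n) (simp_all add: field_simps)

definition pg :: "int \<Rightarrow> complex \<Rightarrow> complex" where
  "pg k t = NN (of_int k / 2) ((3 * of_int k ^ 2 - of_int k) / 2) t"

lemma pg_0: "pg 0 t = 1"
  unfolding pg_def NN_def qpow_def by simp

lemma pg_pos: "pg (int (Suc n)) t = (-1) ^ Suc n * qpow 1 t ^ (Suc n * Suc n + tri n)"
proof -
  have e: "(3 * (real (Suc n))\<^sup>2 - real (Suc n)) / 2 = real (Suc n * Suc n + tri n)"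
    by (simp add: real_tri field_simps power2_eq_square)
  show ?thesis
    unfolding pg_def NN_def of_int_of_nat_eq e qpow_nat qpow_nat_half ..
qed

lemma pg_neg: "pg (- int (Suc n)) t = (-1) ^ Suc n * qpow 1 t ^ (Suc n * Suc n + tri (Suc n))"
proof -
  have e: "(3 * (real_of_int (- int (Suc n)))\<^sup>2 - real_of_int (- int (Suc n))) / 2 = real (Suc n * Suc n + tri (Suc n))"
    by (simp add: real_tri field_simps power2_eq_square)
  have s: "qpow (real_of_int (- int (Suc n)) / 2) 1 = qpow (real (Suc n) / 2) 1"
    by (rule qpow1_shift[where k = "- int (Suc n)"]) simp
  show ?thesis
    unfolding pg_def NN_def e s qpow_nat qpow_nat_half ..
qed

lemma sym_ivl_Suc: "{- int (Suc n)..int (Suc n)} = insert (- int (Suc n)) (insert (int (Suc n)) {- int n..int n})"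
  by auto

lemma pg_sym_sum: "(\<Sum>k\<in>{- int n..int n}. pg k t) = Ash (qpow 1 t) n n"
proof (induction n)
  case 0
  then show ?case by (simp add: pg_0)
next
  case (Suc n)
  have "(\<Sum>k\<in>{- int (Suc n)..int (Suc n)}. pg k t) = pg (- int (Suc n)) t + (pg (int (Suc n)) t + (\<Sum>k\<in>{- int n..int n}. pg k t))"
    unfolding sym_ivl_Suc by (subst sum.insert; simp)+
  also have "\<dots> = Ash (qpow 1 t) (Suc n) (Suc n)"
    unfolding Suc.IH Shanks pg_pos pg_neg by (simp add: algebra_simps)
  finally show ?case .
qed



lemma Tp_bound:
  assumes "norm x < 1"
  shows "norm (Tp x n k) \<le> exp (1 / (1 - norm x))"
proof -
  let ?r = "norm x"
  have "norm (Tp x n k) \<le> (\<Prod>i\<in>{Suc k..n}. norm (1 - x ^ i))"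
    unfolding Tp_def by (rule norm_prod_le)
  also have "\<dots> \<le> (\<Prod>i\<in>{Suc k..n}. exp (?r ^ i))"
  proof (rule prod_mono, safe)
    fix i
    show "0 \<le> norm (1 - x ^ i)" by simp
    have "norm (1 - x ^ i) \<le> norm (1::complex) + norm (x ^ i)" by (rule norm_triangle_ineq4)
    also have "\<dots> = 1 + ?r ^ i" by (simp add: norm_power)
    also have "\<dots> \<le> exp (?r ^ i)" by (rule exp_ge_add_one_self)
    finally show "norm (1 - x ^ i) \<le> exp (?r ^ i)" .
  qed
  also have "\<dots> = exp (\<Sum>i\<in>{Suc k..n}. ?r ^ i)"
    by (simp add: exp_sum)
  also have "\<dots> \<le> exp (1 / (1 - ?r))"
  proof -
    have "(\<Sum>i\<in>{Suc k..n}. ?r ^ i) \<le> suminf (\<lambda>i. ?r ^ i)"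
      by (rule sum_le_suminf) (use assms in \<open>auto intro: summable_geometric\<close>)
    also have "\<dots> = 1 / (1 - ?r)" using assms by (simp add: suminf_geometric)
    finally show ?thesis by simp
  qed
  finally show ?thesis .
qed

lemma Ash_split: "Ash x n n = (\<Prod>i<n. (1 - x ^ Suc i)) + (\<Sum>i<n. (-1) ^ Suc i * x ^ (n * Suc i + tri (Suc i)) * Tp x n (Suc i))"
proof -
  have "Tp x n 0 = (\<Prod>i<n. (1 - x ^ Suc i))"
    unfolding Tp_def by (simp add: prod.atLeast1_atMost_eq)
  then show ?thesis unfolding Ash_def by (subst sum.atMost_shift) simp
qed

lemma tail_tendsto:
  assumes "norm x < 1"
  shows "(\<lambda>n. (\<Sum>i<n. (-1) ^ Suc i * x ^ (n * Suc i + tri (Suc i)) * Tp x n (Suc i))) \<longlonglongrightarrow> 0"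
proof (rule Lim_null_comparison)
  define B where "B = exp (1 / (1 - norm x))"
  let ?r = "norm x"
  show "\<forall>\<^sub>F n in sequentially. norm (\<Sum>i<n. (-1) ^ Suc i * x ^ (n * Suc i + tri (Suc i)) * Tp x n (Suc i)) \<le> B * (of_nat n * ?r ^ n)"
  proof (rule always_eventually, rule allI)
    fix n
    have "norm (\<Sum>i<n. (-1) ^ Suc i * x ^ (n * Suc i + tri (Suc i)) * Tp x n (Suc i))
        \<le> (\<Sum>i<n. norm ((-1) ^ Suc i * x ^ (n * Suc i + tri (Suc i)) * Tp x n (Suc i)))"
      by (rule norm_sum)
    also have "\<dots> \<le> (\<Sum>i<n. ?r ^ n * B)"
    proof (rule sum_mono)
      fix i assume "i \<in> {..<n}"
      have "norm ((-1) ^ Suc i * x ^ (n * Suc i + tri (Suc i)) * Tp x n (Suc i)) = ?r ^ (n * Suc i + tri (Suc i)) * norm (Tp x n (Suc i))"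
        by (simp add: norm_mult norm_power)
      also have "\<dots> \<le> ?r ^ n * B"
      proof (rule mult_mono)
        show "?r ^ (n * Suc i + tri (Suc i)) \<le> ?r ^ n"
          by (rule power_decreasing) (use assms in auto)
        show "norm (Tp x n (Suc i)) \<le> B" unfolding B_def by (rule Tp_bound[OF assms])
      qed auto
      finally show "norm ((-1) ^ Suc i * x ^ (n * Suc i + tri (Suc i)) * Tp x n (Suc i)) \<le> ?r ^ n * B" .
    qed
    also have "\<dots> = B * (of_nat n * ?r ^ n)" by simp
    finally show "norm (\<Sum>i<n. (-1) ^ Suc i * x ^ (n * Suc i + tri (Suc i)) * Tp x n (Suc i)) \<le> B * (of_nat n * ?r ^ n)" .
  qed
  have "(\<lambda>n. of_nat n * ?r ^ n) \<longlonglongrightarrow> 0"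
    by (rule powser_times_n_limit_0) (use assms in simp)
  then show "(\<lambda>n. B * (of_nat n * ?r ^ n)) \<longlonglongrightarrow> 0"
    by (simp add: tendsto_mult_right_zero)
qed

lemma filterlim_sym_ivl:
  "filterlim (\<lambda>n::nat. {- int n..int n}) (finite_subsets_at_top UNIV) sequentially"
  unfolding filterlim_finite_subsets_at_top
proof (safe, goal_cases)
  case (1 X)
  obtain hi where hi: "\<forall>x\<in>X. x \<le> hi" using bdd_above_finite[OF 1(1)] unfolding bdd_above_def by blast
  obtain lo where lo: "\<forall>x\<in>X. lo \<le> x" using bdd_below_finite[OF 1(1)] unfolding bdd_below_def by blast
  show ?case using eventually_ge_at_top[of "nat (max \<bar>lo\<bar> \<bar>hi\<bar>)"]
  proof eventually_elim
    case (elim n)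
    then show ?case using hi lo by force
  qed
qed

lemma sum_nat_halves:
  fixes f :: "int \<Rightarrow> real"
  assumes "(\<lambda>n::nat. f (int n)) summable_on UNIV" "(\<lambda>n::nat. f (- int n)) summable_on UNIV"
  shows "f summable_on UNIV"
proof -
  have "f summable_on (int ` UNIV)"
    using assms(1) by (subst summable_on_reindex) (auto simp: o_def inj_on_def)
  moreover have "f summable_on ((\<lambda>n. - int n) ` UNIV)"
    using assms(2) by (subst summable_on_reindex) (auto simp: o_def inj_on_def)
  ultimately have "f summable_on (int ` UNIV \<union> (\<lambda>n. - int n) ` UNIV)"
    by (rule summable_on_union)
  also have "int ` UNIV \<union> (\<lambda>n. - int n) ` UNIV = UNIV"
  proof -
    have "x \<in> range int \<union> range (\<lambda>n. - int n)" for x :: int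
    proof (cases "x \<ge> 0")
      case True then have "x = int (nat x)" by simp
      then show ?thesis by blast
    next
      case False then have "x = - int (nat (- x))" by simp
      then show ?thesis by blast
    qed
    then show ?thesis by blast
  qed
  finally show ?thesis .
qed

lemma summable_geom_abs:
  assumes "0 \<le> \<rho>" "\<rho> < (1::real)"
  shows "(\<lambda>n::int. \<rho> ^ nat \<bar>n\<bar>) summable_on UNIV"
proof (rule sum_nat_halves)
  have "summable (\<lambda>n. \<rho> ^ n)" using assms by (intro summable_geometric) auto
  then show "(\<lambda>n::nat. \<rho> ^ nat \<bar>int n\<bar>) summable_on UNIV"
    "(\<lambda>n::nat. \<rho> ^ nat \<bar>- int n\<bar>) summable_on UNIV"
    using assms by (simp_all add: summable_on_UNIV_nonneg_real_iff)
qed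

lemma quad_lower:
  fixes a b n :: real
  assumes "a > 0"
  shows "a * n ^ 2 + b * n \<ge> a * \<bar>n\<bar> - (a * \<bar>b / (2 * a)\<bar> + a / 4 + a * (b / (2 * a)) ^ 2)"
proof -
  define \<beta> where "\<beta> = b / (2 * a)"
  have eq: "a * n ^ 2 + b * n = a * (n + \<beta>) ^ 2 - a * \<beta> ^ 2"
    using assms unfolding \<beta>_def by (simp add: field_simps power2_eq_square)
  have sq: "(n + \<beta>) ^ 2 \<ge> \<bar>n + \<beta>\<bar> - 1/4"
  proof -
    have "0 \<le> (\<bar>n + \<beta>\<bar> - 1/2) ^ 2" by simp
    also have "\<dots> = \<bar>n + \<beta>\<bar> ^ 2 - \<bar>n + \<beta>\<bar> + 1/4" by (simp add: power2_eq_square algebra_simps)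
    also have "\<bar>n + \<beta>\<bar> ^ 2 = (n + \<beta>) ^ 2" by simp
    finally show ?thesis by simp
  qed
  have "\<bar>n + \<beta>\<bar> \<ge> \<bar>n\<bar> - \<bar>\<beta>\<bar>" by simp
  with sq have "(n + \<beta>) ^ 2 \<ge> \<bar>n\<bar> - \<bar>\<beta>\<bar> - 1/4" by simp
  then have "a * (n + \<beta>) ^ 2 \<ge> a * (\<bar>n\<bar> - \<bar>\<beta>\<bar> - 1/4)"
    using assms by (intro mult_left_mono) auto
  then show ?thesis unfolding eq \<beta>_def[symmetric] by (simp add: algebra_simps)
qed

lemma summable_gauss:
  fixes a b :: real
  assumes "a > 0"
  shows "(\<lambda>n::int. exp (- (a * of_int n ^ 2 + b * of_int n))) summable_on UNIV"
proof -
  define K where "K = a * \<bar>b / (2 * a)\<bar> + a / 4 + a * (b / (2 * a)) ^ 2"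
  have "(\<lambda>n::int. exp K * exp (- a) ^ nat \<bar>n\<bar>) summable_on UNIV"
    by (intro summable_on_cmult_right summable_geom_abs) (use assms in auto)
  then show ?thesis
  proof (rule summable_on_comparison_test)
    fix n :: int
    have "exp (- (a * of_int n ^ 2 + b * of_int n)) \<le> exp (K - a * \<bar>of_int n\<bar>)"
      using quad_lower[OF assms, of "of_int n" b] unfolding K_def by simp
    also have "\<dots> = exp K * exp (- a) ^ nat \<bar>n\<bar>"
      by (simp add: exp_diff exp_minus field_simps flip: exp_of_nat_mult)
    finally show "exp (- (a * of_int n ^ 2 + b * of_int n)) \<le> exp K * exp (- a) ^ nat \<bar>n\<bar>" .
  qed simp
qed



lemma NN_abs_summable:
  assumes "Im t > 0" "A > 0"
  shows "(\<lambda>n::int. norm (NN (\<alpha> n) (A * of_int n ^ 2 + B * of_int n + C) t)) summable_on UNIV"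
proof -
  have "(\<lambda>n::int. exp (- 2 * pi * C * Im t) * exp (- ((2 * pi * A * Im t) * of_int n ^ 2 + (2 * pi * B * Im t) * of_int n))) summable_on UNIV"
    by (intro summable_on_cmult_right summable_gauss) (use assms in auto)
  moreover have "norm (NN (\<alpha> n) (A * of_int n ^ 2 + B * of_int n + C) t) =
      exp (- 2 * pi * C * Im t) * exp (- ((2 * pi * A * Im t) * of_int n ^ 2 + (2 * pi * B * Im t) * of_int n))" for n :: int
    unfolding norm_NN mult_exp_exp by (simp add: algebra_simps)
  ultimately show ?thesis by simp
qed

lemma NN_summable:
  assumes "Im t > 0" "A > 0"
  shows "(\<lambda>n::int. NN (\<alpha> n) (A * of_int n ^ 2 + B * of_int n + C) t) summable_on UNIV"
  using NN_abs_summable[OF assms] summable_on_iff_abs_summable_on_complex by blast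

lemma pg_alt: "pg k t = NN (of_int k / 2) (3/2 * of_int k ^ 2 + (-1/2) * of_int k + 0) t"
  unfolding pg_def by (simp add: field_simps)

lemma pg_abs_summable: "Im t > 0 \<Longrightarrow> (\<lambda>k. norm (pg k t)) summable_on UNIV"
  unfolding pg_alt by (rule NN_abs_summable) auto

lemma pg_summable: "Im t > 0 \<Longrightarrow> (\<lambda>k. pg k t) summable_on UNIV"
  using pg_abs_summable summable_on_iff_abs_summable_on_complex by blast

definition Pent :: "complex \<Rightarrow> complex" where
  "Pent t = (\<Sum>\<^sub>\<infinity>k::int. pg k t)"

lemma pg_has_sum: "Im t > 0 \<Longrightarrow> ((\<lambda>k. pg k t) has_sum Pent t) UNIV"
  unfolding Pent_def using pg_summable by (rule has_sum_infsum)

lemma pent_thm: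
  assumes "Im t > 0"
  shows "(\<Prod>n. 1 - qpow (real (Suc n)) t) = Pent t"
proof -
  define q where "q = qpow 1 t"
  have nq: "norm q < 1" unfolding q_def using assms by (rule norm_q)
  have lim1: "(\<lambda>n. \<Sum>k\<in>{- int n..int n}. pg k t) \<longlonglongrightarrow> Pent t"
    using pg_has_sum[OF assms] unfolding has_sum_def
    by (rule filterlim_compose[OF _ filterlim_sym_ivl])
  have "(\<lambda>n. Ash q n n - (\<Sum>i<n. (-1) ^ Suc i * q ^ (n * Suc i + tri (Suc i)) * Tp q n (Suc i))) \<longlonglongrightarrow> Pent t - 0"
    using lim1 tail_tendsto[OF nq] unfolding pg_sym_sum q_def by (rule tendsto_diff)
  then have lim2: "(\<lambda>n. \<Prod>i<n. (1 - q ^ Suc i)) \<longlonglongrightarrow> Pent t"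
    by (simp add: Ash_split)
  have fq: "qpow (real (Suc n)) t = q ^ Suc n" for n unfolding q_def by (rule qpow_nat)
  have nz: "1 - q ^ Suc i \<noteq> 0" for i
  proof
    assume "1 - q ^ Suc i = 0"
    then have "norm (q ^ Suc i) = 1" by (metis eq_iff_diff_eq_0 norm_one)
    moreover have "norm (q ^ Suc i) < 1"
    proof -
      have "norm q ^ Suc i \<le> norm q ^ 1" using nq by (intro power_decreasing) auto
      then show ?thesis using nq unfolding norm_power by simp
    qed
    ultimately show False by simp
  qed
  have cp: "convergent_prod (\<lambda>i. 1 - q ^ Suc i)"
  proof (intro abs_convergent_prod_imp_convergent_prod summable_imp_abs_convergent_prod)
    have "summable (\<lambda>i. norm q ^ Suc i)" using nq by (simp add: summable_geometric)
    moreover have "norm (1 - q ^ Suc i - 1) = norm q ^ Suc i" for i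
    proof -
      have "1 - q ^ Suc i - 1 = - (q ^ Suc i)" by simp
      then show ?thesis by (simp only: norm_minus_cancel norm_power)
    qed
    ultimately show "summable (\<lambda>i. norm (1 - q ^ Suc i - 1))" by simp
  qed
  have "(\<Prod>n. 1 - qpow (real (Suc n)) t) = (\<Prod>i. 1 - q ^ Suc i)" unfolding fq ..
  also have "\<dots> = lim (\<lambda>n. \<Prod>i<n. (1 - q ^ Suc i))"
    by (rule prodinf_eq_lim'[OF cp nz])
  also have "\<dots> = Pent t" using lim2 by (rule limI)
  finally show ?thesis .
qed

lemma eta_eq: assumes "Im t > 0" shows "dedekind_eta t = qpow (1/24) t * Pent t"
  by (simp only: dedekind_eta_def pent_thm[OF assms])

lemma has_sum_prod_abs:
  fixes f g :: "_ \<Rightarrow> complex"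
  assumes nf: "(\<lambda>x. norm (f x)) summable_on A" and ng: "(\<lambda>y. norm (g y)) summable_on B"
  assumes hf: "(f has_sum a) A" and hg: "(g has_sum b) B"
  shows "((\<lambda>(x,y). f x * g y) has_sum (a * b)) (A \<times> B)"
proof (rule has_sum_SigmaI)
  show "((\<lambda>y. case (x, y) of (x, y) \<Rightarrow> f x * g y) has_sum f x * b) B" if "x \<in> A" for x
    using has_sum_cmult_right[OF hg, of "f x"] by simp
  show "((\<lambda>x. f x * b) has_sum a * b) A" by (rule has_sum_cmult_left[OF hf])
  have "(\<lambda>p. norm (case p of (x, y) \<Rightarrow> f x * g y)) summable_on A \<times> B"
  proof -
    have "(\<lambda>p. case p of (x, y) \<Rightarrow> norm (f x) * norm (g y)) summable_on (SIGMA x:A. B)"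
    proof (rule summable_on_SigmaI)
      show "((\<lambda>y. case (x, y) of (x, y) \<Rightarrow> norm (f x) * norm (g y)) has_sum norm (f x) * infsum (\<lambda>y. norm (g y)) B) B" for x
        using has_sum_cmult_right[OF has_sum_infsum[OF ng], of "norm (f x)"] by simp
      show "(\<lambda>x. norm (f x) * infsum (\<lambda>y. norm (g y)) B) summable_on A"
        by (rule summable_on_cmult_left[OF nf])
    qed auto
    then show ?thesis by (simp add: case_prod_unfold norm_mult)
  qed
  then show "(\<lambda>(x, y). f x * g y) summable_on A \<times> B"
    using summable_on_iff_abs_summable_on_complex by blast
qed

lemma pent_sq:
  assumes "Im t > 0"
  shows "((\<lambda>(a,b). pg a t * pg b t) has_sum (Pent t * Pent t)) UNIV"
  using has_sum_prod_abs[OF pg_abs_summable[OF assms] pg_abs_summable[OF assms] pg_has_sum[OF assms] pg_has_sum[OF assms]]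
  by simp



definition Ev :: "(int \<times> int) set" where "Ev = {p. even (fst p + snd p)}"
definition Od :: "(int \<times> int) set" where "Od = {p. odd (fst p + snd p)}"

lemma has_sum_parity:
  fixes f :: "int \<times> int \<Rightarrow> complex"
  assumes "(f has_sum s1) Ev" "(f has_sum s2) Od"
  shows "(f has_sum (s1 + s2)) UNIV"
proof -
  have "(f has_sum (s1 + s2)) (Ev \<union> Od)"
    by (rule has_sum_Un_disjoint[OF assms]) (auto simp: Ev_def Od_def)
  moreover have "Ev \<union> Od = UNIV" by (auto simp: Ev_def Od_def)
  ultimately show ?thesis by simp
qed

lemma reindex_Od1:
  "((\<lambda>(u,v). f (u + v + 1, u - v)) has_sum s) UNIV \<longleftrightarrow> (f has_sum s) Od"
  apply (rule has_sum_reindex_bij_witness[where j = "\<lambda>(u,v). (u + v + 1, u - v)" and i = "\<lambda>(n,m). ((n + m - 1) div 2, (n - m - 1) div 2)"])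
  apply (auto simp: Od_def split: prod.splits)
  apply presburger+
  done

lemma reindex_Ev1:
  "((\<lambda>(n,m). f (n - m, - n - m)) has_sum s) UNIV \<longleftrightarrow> (f has_sum s) Ev"
  apply (rule has_sum_reindex_bij_witness[where j = "\<lambda>(n,m). (n - m, - n - m)" and i = "\<lambda>(a,b). ((a - b) div 2, - ((a + b) div 2))"])
  apply (auto simp: Ev_def split: prod.splits)
  apply presburger+
  done

lemma reindex_Od2:
  "((\<lambda>(n,m). f (n - m, - n - m - 1)) has_sum s) UNIV \<longleftrightarrow> (f has_sum s) Od"
  apply (rule has_sum_reindex_bij_witness[where j = "\<lambda>(n,m). (n - m, - n - m - 1)" and i = "\<lambda>(a,b). ((a - b - 1) div 2, (- a - b - 1) div 2)"])
  apply (auto simp: Od_def split: prod.splits)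
  apply presburger+
  done

lemma reindex_Od3:
  "((\<lambda>(n,m). f (n + m, n - m - 1)) has_sum s) UNIV \<longleftrightarrow> (f has_sum s) Od"
  apply (rule has_sum_reindex_bij_witness[where j = "\<lambda>(n,m). (n + m, n - m - 1)" and i = "\<lambda>(a,b). ((a + b + 1) div 2, (a - b - 1) div 2)"])
  apply (auto simp: Od_def split: prod.splits)
  apply presburger+
  done

lemma reindex_Ev3:
  "((\<lambda>(n,m). f (n + m, n - m)) has_sum s) UNIV \<longleftrightarrow> (f has_sum s) Ev"
  apply (rule has_sum_reindex_bij_witness[where j = "\<lambda>(n,m). (n + m, n - m)" and i = "\<lambda>(a,b). ((a + b) div 2, (a - b) div 2)"])
  apply (auto simp: Ev_def split: prod.splits)
  apply presburger+
  done

lemma reindex_uminus: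
  "((\<lambda>k::int. f (- k)) has_sum s) UNIV \<longleftrightarrow> (f has_sum s) UNIV"
  by (rule has_sum_reindex_bij_witness[where j = "\<lambda>k. - k" and i = "\<lambda>k. - k"]) auto

lemma reindex_shift:
  "((\<lambda>k::int. f (k + c)) has_sum s) UNIV \<longleftrightarrow> (f has_sum s) UNIV"
  by (rule has_sum_reindex_bij_witness[where j = "\<lambda>k. k + c" and i = "\<lambda>k. k - c"]) auto

lemma reindex_neg1:
  "((\<lambda>k::int. f (- k - 1)) has_sum s) UNIV \<longleftrightarrow> (f has_sum s) UNIV"
  by (rule has_sum_reindex_bij_witness[where j = "\<lambda>k. - k - 1" and i = "\<lambda>k. - k - 1"]) auto

lemma reindex_pair:
  fixes f :: "int \<times> int \<Rightarrow> complex"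
  shows "((\<lambda>(u,v). f (u + 1, - v)) has_sum s) UNIV \<longleftrightarrow> (f has_sum s) UNIV"
  by (rule has_sum_reindex_bij_witness[where j = "\<lambda>(u,v). (u + 1, - v)" and i = "\<lambda>(a,b). (a - 1, - b)"]) auto

lemma split3:
  fixes f :: "int \<Rightarrow> complex"
  assumes "((\<lambda>k. f (3 * k)) has_sum a) UNIV" "((\<lambda>k. f (3 * k + 1)) has_sum b) UNIV"
    "((\<lambda>k. f (3 * k + 2)) has_sum c) UNIV"
  shows "(f has_sum (a + b + c)) UNIV"
proof -
  have h0: "(f has_sum a) {k. k mod 3 = 0}"
    using assms(1) by (subst (asm) has_sum_reindex_bij_witness[where j = "\<lambda>k. 3 * k" and i = "\<lambda>k. k div 3" and T = "{k. k mod 3 = 0}" and h = f]) auto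
  have "((\<lambda>k. f (3 * k + 1)) has_sum b) UNIV \<longleftrightarrow> (f has_sum b) {k. k mod 3 = 1}"
    apply (rule has_sum_reindex_bij_witness[where j = "\<lambda>k. 3 * k + 1" and i = "\<lambda>k. k div 3"])
    apply auto
    apply presburger+
    done
  then have h1: "(f has_sum b) {k. k mod 3 = 1}" using assms(2) by simp
  have "((\<lambda>k. f (3 * k + 2)) has_sum c) UNIV \<longleftrightarrow> (f has_sum c) {k. k mod 3 = 2}"
    apply (rule has_sum_reindex_bij_witness[where j = "\<lambda>k. 3 * k + 2" and i = "\<lambda>k. k div 3"])
    apply auto
    apply presburger+
    done
  then have h2: "(f has_sum c) {k. k mod 3 = 2}" using assms(3) by simp
  have "(f has_sum (a + b + c)) ({k. k mod 3 = 0} \<union> {k. k mod 3 = 1} \<union> {k. k mod 3 = 2})"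
    by (intro has_sum_Un_disjoint h0 h1 h2) auto
  moreover have "{k. k mod 3 = 0} \<union> {k. k mod 3 = 1} \<union> {k. k mod 3 = 2} = (UNIV :: int set)"
    by auto
  ultimately show ?thesis by simp
qed



lemma minus_one_powi: "(-1::complex) powi n = qpow (of_int n / 2) 1"
proof -
  have "(-1::complex) powi n = exp (of_real pi * \<i>) powi n" by simp
  also have "\<dots> = exp (of_int n * (of_real pi * \<i>))" by (rule exp_power_int)
  also have "\<dots> = qpow (of_int n / 2) 1" unfolding qpow_def by (simp add: field_simps)
  finally show ?thesis .
qed

lemma hs_of:
  assumes "Im t > 0" "A > 0" "X = (\<Sum>\<^sub>\<infinity>n. F n)" "\<And>n. F n = NN (\<alpha> n) (A * of_int n ^ 2 + B * of_int n + C) t"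
  shows "(\<lambda>n. norm (NN (\<alpha> n) (A * of_int n ^ 2 + B * of_int n + C) t)) summable_on UNIV"
    "((\<lambda>n. NN (\<alpha> n) (A * of_int n ^ 2 + B * of_int n + C) t) has_sum X) UNIV"
proof -
  show "(\<lambda>n. norm (NN (\<alpha> n) (A * of_int n ^ 2 + B * of_int n + C) t)) summable_on UNIV"
    using assms(1,2) by (rule NN_abs_summable)
  have F: "F = (\<lambda>n. NN (\<alpha> n) (A * of_int n ^ 2 + B * of_int n + C) t)" using assms(4) by auto
  show "((\<lambda>n. NN (\<alpha> n) (A * of_int n ^ 2 + B * of_int n + C) t) has_sum X) UNIV"
    unfolding assms(3) F using NN_summable[OF assms(1,2)] by (rule has_sum_infsum)
qed

lemma T1a: assumes "Im t > 0"
  shows "((\<lambda>n. NN (0) (3 * of_int n ^ 2 + 0 * of_int n + 0) t) has_sum theta3 0 (6 * t)) UNIV"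
  apply (rule hs_of(2)[OF assms _ theta3_def])
   apply simp
  apply (unfold NN_def minus_one_powi qpow_def mult_exp_exp)
  apply (rule arg_cong[where f = exp])
  apply (simp add: field_simps power2_eq_square)
  done

lemma T1b: assumes "Im t > 0"
  shows "((\<lambda>n. NN (0) (3 * of_int n ^ 2 + 1 * of_int n + 0) t) has_sum theta3 t (6 * t)) UNIV"
  apply (rule hs_of(2)[OF assms _ theta3_def])
   apply simp
  apply (unfold NN_def minus_one_powi qpow_def mult_exp_exp)
  apply (rule arg_cong[where f = exp])
  apply (simp add: field_simps power2_eq_square)
  done

lemma T1c: assumes "Im t > 0"
  shows "((\<lambda>n. NN (0) (3 * of_int n ^ 2 + 3 * of_int n + 3/4) t) has_sum theta2 0 (6 * t)) UNIV"
  apply (rule hs_of(2)[OF assms _ theta2_def])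
   apply simp
  apply (unfold NN_def minus_one_powi qpow_def mult_exp_exp)
  apply (rule arg_cong[where f = exp])
  apply (simp add: field_simps power2_eq_square)
  done

lemma T1d: assumes "Im t > 0"
  shows "((\<lambda>n. NN (0) (3 * of_int n ^ 2 + 4 * of_int n + 5/4) t) has_sum theta2 t (6 * t)) UNIV"
  apply (rule hs_of(2)[OF assms _ theta2_def])
   apply simp
  apply (unfold NN_def minus_one_powi qpow_def mult_exp_exp)
  apply (rule arg_cong[where f = exp])
  apply (simp add: field_simps power2_eq_square)
  done

lemma T2a: assumes "Im t > 0"
  shows "((\<lambda>n. NN (0) (1/12 * of_int n ^ 2 + 0 * of_int n + 0) t) has_sum theta3 0 (t / 6)) UNIV"
  apply (rule hs_of(2)[OF assms _ theta3_def])
   apply simp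
  apply (unfold NN_def minus_one_powi qpow_def mult_exp_exp)
  apply (rule arg_cong[where f = exp])
  apply (simp add: field_simps power2_eq_square)
  done

lemma T2b: assumes "Im t > 0"
  shows "((\<lambda>n. NN (of_int n / 6) (1/12 * of_int n ^ 2 + 0 * of_int n + 0) t) has_sum theta3 (1/6) (t / 6)) UNIV"
  apply (rule hs_of(2)[OF assms _ theta3_def])
   apply simp
  apply (unfold NN_def minus_one_powi qpow_def mult_exp_exp)
  apply (rule arg_cong[where f = exp])
  apply (simp add: field_simps power2_eq_square)
  done

lemma T2c: assumes "Im t > 0"
  shows "((\<lambda>n. NN (of_int n / 2) (1/12 * of_int n ^ 2 + 0 * of_int n + 0) t) has_sum theta4 0 (t / 6)) UNIV"
  apply (rule hs_of(2)[OF assms _ theta4_def])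
   apply simp
  apply (unfold NN_def minus_one_powi qpow_def mult_exp_exp)
  apply (rule arg_cong[where f = exp])
  apply (simp add: field_simps power2_eq_square)
  done

lemma T2d: assumes "Im t > 0"
  shows "((\<lambda>n. NN (of_int n / 2 + of_int n / 6) (1/12 * of_int n ^ 2 + 0 * of_int n + 0) t) has_sum theta4 (1/6) (t / 6)) UNIV"
  apply (rule hs_of(2)[OF assms _ theta4_def])
   apply simp
  apply (unfold NN_def minus_one_powi qpow_def mult_exp_exp)
  apply (rule arg_cong[where f = exp])
  apply (simp add: field_simps power2_eq_square)
  done

lemma T3a: assumes "Im t > 0"
  shows "((\<lambda>n. NN (0) (1/3 * of_int n ^ 2 + 0 * of_int n + 0) t) has_sum theta3 0 (2 * t / 3)) UNIV"
  apply (rule hs_of(2)[OF assms _ theta3_def])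
   apply simp
  apply (unfold NN_def minus_one_powi qpow_def mult_exp_exp)
  apply (rule arg_cong[where f = exp])
  apply (simp add: field_simps power2_eq_square)
  done

lemma T3b: assumes "Im t > 0"
  shows "((\<lambda>n. NN (of_int n / 3 + 1/6) (1/3 * of_int n ^ 2 + 1/3 * of_int n + 1/12) t) has_sum theta2 (1/3) (2 * t / 3)) UNIV"
  apply (rule hs_of(2)[OF assms _ theta2_def])
   apply simp
  apply (unfold NN_def minus_one_powi qpow_def mult_exp_exp)
  apply (rule arg_cong[where f = exp])
  apply (simp add: field_simps power2_eq_square)
  done

lemma T3c: assumes "Im t > 0"
  shows "((\<lambda>n. NN (0) (1/3 * of_int n ^ 2 + 1/3 * of_int n + 1/12) t) has_sum theta2 0 (2 * t / 3)) UNIV"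
  apply (rule hs_of(2)[OF assms _ theta2_def])
   apply simp
  apply (unfold NN_def minus_one_powi qpow_def mult_exp_exp)
  apply (rule arg_cong[where f = exp])
  apply (simp add: field_simps power2_eq_square)
  done

lemma T3d: assumes "Im t > 0"
  shows "((\<lambda>n. NN (of_int n / 3) (1/3 * of_int n ^ 2 + 0 * of_int n + 0) t) has_sum theta3 (1/3) (2 * t / 3)) UNIV"
  apply (rule hs_of(2)[OF assms _ theta3_def])
   apply simp
  apply (unfold NN_def minus_one_powi qpow_def mult_exp_exp)
  apply (rule arg_cong[where f = exp])
  apply (simp add: field_simps power2_eq_square)
  done

lemma T4a: assumes "Im t > 0"
  shows "((\<lambda>n. NN (0) (3/4 * of_int n ^ 2 + 0 * of_int n + 0) t) has_sum theta3 0 (3 * t / 2)) UNIV"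
  apply (rule hs_of(2)[OF assms _ theta3_def])
   apply simp
  apply (unfold NN_def minus_one_powi qpow_def mult_exp_exp)
  apply (rule arg_cong[where f = exp])
  apply (simp add: field_simps power2_eq_square)
  done

lemma T4b: assumes "Im t > 0"
  shows "((\<lambda>n. NN (of_int n / 2) (3/4 * of_int n ^ 2 + 1 * of_int n + 0) t) has_sum theta4 t (3 * t / 2)) UNIV"
  apply (rule hs_of(2)[OF assms _ theta4_def])
   apply simp
  apply (unfold NN_def minus_one_powi qpow_def mult_exp_exp)
  apply (rule arg_cong[where f = exp])
  apply (simp add: field_simps power2_eq_square)
  done

lemma T4c: assumes "Im t > 0"
  shows "((\<lambda>n. NN (of_int n / 2) (3/4 * of_int n ^ 2 + 0 * of_int n + 0) t) has_sum theta4 0 (3 * t / 2)) UNIV"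
  apply (rule hs_of(2)[OF assms _ theta4_def])
   apply simp
  apply (unfold NN_def minus_one_powi qpow_def mult_exp_exp)
  apply (rule arg_cong[where f = exp])
  apply (simp add: field_simps power2_eq_square)
  done

lemma T4d: assumes "Im t > 0"
  shows "((\<lambda>n. NN (0) (3/4 * of_int n ^ 2 + 1 * of_int n + 0) t) has_sum theta3 t (3 * t / 2)) UNIV"
  apply (rule hs_of(2)[OF assms _ theta3_def])
   apply simp
  apply (unfold NN_def minus_one_powi qpow_def mult_exp_exp)
  apply (rule arg_cong[where f = exp])
  apply (simp add: field_simps power2_eq_square)
  done



lemma pg_mult: "pg a t * pg b t = NN ((of_int a + of_int b) / 2) ((3 * of_int a ^ 2 - of_int a + 3 * of_int b ^ 2 - of_int b) / 2) t"
  unfolding pg_def NN_mult by (rule NN_int[where k = 0]) (simp_all add: field_simps)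

lemma nsum: "Im t > 0 \<Longrightarrow> A > 0 \<Longrightarrow> (\<lambda>n::int. norm (NN (\<alpha> n) (A * of_int n ^ 2 + B * of_int n + C) t)) summable_on UNIV"
  by (rule NN_abs_summable)

lemma prodT:
  assumes "Im t > 0" "A > 0" "A' > 0"
    "((\<lambda>n. NN (\<alpha> n) (A * of_int n ^ 2 + B * of_int n + C) t) has_sum X) UNIV"
    "((\<lambda>n. NN (\<alpha>' n) (A' * of_int n ^ 2 + B' * of_int n + C') t) has_sum Y) UNIV"
  shows "((\<lambda>(n,m). NN (\<alpha> n) (A * of_int n ^ 2 + B * of_int n + C) t * NN (\<alpha>' m) (A' * of_int m ^ 2 + B' * of_int m + C') t) has_sum (X * Y)) UNIV"
  using has_sum_prod_abs[OF nsum[OF assms(1,2)] nsum[OF assms(1,3)] assms(4,5)] by simp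

lemma id1:
  assumes "Im t > 0"
  shows "theta3 0 (6 * t) * theta3 t (6 * t) - theta2 0 (6 * t) * theta2 t (6 * t)
           = qpow (-1/12) t * (dedekind_eta t)^2"
proof -
  define G where "G = (\<lambda>(a::int, b::int). pg a t * pg b t)"
  note P1 = prodT[OF assms _ _ T1a[OF assms] T1b[OF assms], simplified]
  note P2 = prodT[OF assms _ _ T1c[OF assms] T1d[OF assms], simplified]
  have "((\<lambda>(n,m). G (n - m, - n - m)) has_sum (theta3 0 (6 * t) * theta3 t (6 * t))) UNIV"
  proof (rule has_sum_cong[THEN iffD1, OF _ P1], clarsimp)
    fix n m :: int
    show "NN 0 (3 * (of_int n)\<^sup>2) t * NN 0 (3 * (of_int m)\<^sup>2 + of_int m) t = G (n - m, - n - m)"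
      unfolding G_def prod.case pg_mult NN_mult
      by (rule NN_int[where k = "m"]) (simp_all add: field_simps power2_eq_square)
  qed
  then have E1: "(G has_sum (theta3 0 (6 * t) * theta3 t (6 * t))) Ev" by (simp only: reindex_Ev1)
  have "((\<lambda>(n,m). G (n - m, - n - m - 1)) has_sum - (theta2 0 (6 * t) * theta2 t (6 * t))) UNIV"
  proof (rule has_sum_uminus[THEN iffD1], rule has_sum_cong[THEN iffD1, OF _ P2], clarsimp)
    fix n m :: int
    show "NN 0 (3 * (of_int n)\<^sup>2 + 3 * of_int n + 3 / 4) t * NN 0 (3 * (of_int m)\<^sup>2 + 4 * of_int m + 5 / 4) t = - G (n - m, - n - m - 1)"
      unfolding G_def prod.case pg_mult NN_mult
      by (rule NN_half[where k = "m"]) (simp_all add: field_simps power2_eq_square)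
  qed
  then have O1: "(G has_sum - (theta2 0 (6 * t) * theta2 t (6 * t))) Od" by (simp only: reindex_Od2)
  have "(G has_sum (theta3 0 (6 * t) * theta3 t (6 * t) + - (theta2 0 (6 * t) * theta2 t (6 * t)))) UNIV"
    by (rule has_sum_parity[OF E1 O1])
  moreover have "(G has_sum (Pent t * Pent t)) UNIV" unfolding G_def by (rule pent_sq[OF assms])
  ultimately have "theta3 0 (6 * t) * theta3 t (6 * t) + - (theta2 0 (6 * t) * theta2 t (6 * t)) = Pent t * Pent t"
    by (rule has_sum_unique)
  moreover have "qpow (-1/12) t * (dedekind_eta t)^2 = Pent t * Pent t"
  proof -
    have "qpow (-1/12) t * (dedekind_eta t)^2 = (qpow (-1/12) t * qpow (1/24) t * qpow (1/24) t) * (Pent t * Pent t)"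
      unfolding eta_eq[OF assms] by (simp add: power2_eq_square mult_ac)
    also have "qpow (-1/12) t * qpow (1/24) t * qpow (1/24) t = 1"
      unfolding qpow_add by (simp add: qpow_def)
    finally show ?thesis by simp
  qed
  ultimately show ?thesis by simp
qed

lemma has_sum_neg: "(f has_sum S) A \<Longrightarrow> ((\<lambda>x. - f x) has_sum - S) A"
  for f :: "_ \<Rightarrow> complex" by (simp add: has_sum_uminus)

lemma qpowt_NN: "qpow c t * NN a b t = NN a (c + b) t"
  unfolding NN_def by (simp add: qpow_add[symmetric] mult_ac)

lemma NN_even: "even (n + m) \<Longrightarrow> NN (of_int m / 2) b t = NN (of_int n / 2) b t"
proof -
  assume "even (n + m)"
  then have "m - n = 2 * ((m - n) div 2)" by presburger
  then have "real_of_int m - of_int n = 2 * of_int ((m - n) div 2)" by (metis of_int_diff of_int_mult of_int_numeral)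
  then show ?thesis by (intro NN_int[where k = "(m - n) div 2"]) (simp_all add: field_simps)
qed

lemma id4:
  assumes "Im t > 0"
  shows "theta3 0 (3 * t / 2) * theta4 t (3 * t / 2) - theta4 0 (3 * t / 2) * theta3 t (3 * t / 2)
           = -2 * qpow (-1/3) t * (dedekind_eta t)^2"
proof -
  define G where "G = (\<lambda>(a::int, b::int). pg a t * pg b t)"
  define K where "K = (\<lambda>(n::int, m::int). NN (of_int m / 2) (3/4 * of_int n ^ 2 + 3/4 * of_int m ^ 2 + of_int m) t
                   - NN (of_int n / 2) (3/4 * of_int n ^ 2 + 3/4 * of_int m ^ 2 + of_int m) t)"
  define c where "c = -2 * qpow (-1/4) t"
  note P1 = prodT[OF assms _ _ T4a[OF assms] T4b[OF assms], simplified]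
  note P2 = prodT[OF assms _ _ T4c[OF assms] T4d[OF assms], simplified]
  have "(K has_sum (theta3 0 (3 * t / 2) * theta4 t (3 * t / 2) + - (theta4 0 (3 * t / 2) * theta3 t (3 * t / 2)))) UNIV"
    by (rule has_sum_cong[THEN iffD1, OF _ has_sum_add[OF P1 has_sum_neg[OF P2]]]) (auto simp: K_def NN_mult add.assoc)
  moreover have "(K has_sum (0 + c * (Pent t * Pent t))) UNIV"
  proof (rule has_sum_parity)
    show "(K has_sum 0) Ev"
    proof (rule has_sum_0)
      fix x assume "x \<in> Ev"
      then obtain n m where x: "x = (n, m)" and e: "even (n + m)" by (cases x) (auto simp: Ev_def)
      show "K x = 0" unfolding x K_def prod.case NN_even[OF e] by simp
    qed
    have "((\<lambda>(u,v). G (u + 1, - v)) has_sum (Pent t * Pent t)) UNIV"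
      unfolding reindex_pair G_def by (rule pent_sq[OF assms])
    from has_sum_cmult_right[OF this, of c]
    have "((\<lambda>(u,v). K (u + v + 1, u - v)) has_sum (c * (Pent t * Pent t))) UNIV"
    proof (rule has_sum_cong[THEN iffD1, rotated], clarsimp)
      fix u v :: int
      define \<beta> where "\<beta> = (3 * of_int u ^ 2 + 5 * of_int u + 3 * of_int v ^ 2 + of_int v) / 2 + (3/4 :: real)"
      have "K (u + v + 1, u - v) = NN (of_int (u - v) / 2) \<beta> t - (- NN (of_int (u - v) / 2) \<beta> t)"
        unfolding K_def prod.case
        by (intro arg_cong2[where f = "(-)"] NN_int[where k = 0] NN_half[where k = v])
           (simp_all add: \<beta>_def field_simps power2_eq_square)
      moreover have "c * G (u + 1, - v) = -2 * (- NN (of_int (u - v) / 2) \<beta> t)"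
        unfolding c_def G_def prod.case pg_mult mult.assoc qpowt_NN
        by (intro arg_cong2[where f = "(*)"] refl NN_half[where k = 0])
           (simp_all add: \<beta>_def field_simps power2_eq_square)
      ultimately show "c * G (u + 1, - v) = K (u + v + 1, u - v)" by simp
    qed
    then show "(K has_sum (c * (Pent t * Pent t))) Od" by (simp only: reindex_Od1)
  qed
  ultimately have "theta3 0 (3 * t / 2) * theta4 t (3 * t / 2) + - (theta4 0 (3 * t / 2) * theta3 t (3 * t / 2)) = 0 + c * (Pent t * Pent t)"
    by (rule has_sum_unique)
  moreover have "-2 * qpow (-1/3) t * (dedekind_eta t)^2 = c * (Pent t * Pent t)"
  proof -
    have "-2 * qpow (-1/3) t * (dedekind_eta t)^2 = -2 * (qpow (-1/3) t * qpow (1/24) t * qpow (1/24) t) * (Pent t * Pent t)"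
      unfolding eta_eq[OF assms] by (simp add: power2_eq_square mult_ac)
    also have "qpow (-1/3) t * qpow (1/24) t * qpow (1/24) t = qpow (-1/4) t"
      unfolding qpow_add by simp
    finally show ?thesis unfolding c_def by simp
  qed
  ultimately show ?thesis by simp
qed



lemma qpow1_NN: "qpow c 1 * NN a b t = NN (c + a) b t"
  unfolding NN_def by (simp add: qpow_add[symmetric] mult_ac)

lemma KX:
  assumes "Im t > 0" "odd \<sigma>"
  shows "((\<lambda>s. NN (of_int \<sigma> * of_int s / 6) (1/6 * of_int s ^ 2 + 1/6 * of_int s + 1/24) t) has_sum
           ((1 + qpow (- of_int \<sigma> / 6) 1) * (qpow (1/24) t * Pent t))) UNIV"
proof -
  obtain j where j: "\<sigma> = 2 * j + 1" using assms(2) by (metis oddE)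
  define f where "f = (\<lambda>s::int. NN (of_int \<sigma> * of_int s / 6) (1/6 * of_int s ^ 2 + 1/6 * of_int s + 1/24) t)"
  have a: "((\<lambda>k. f (3 * k)) has_sum (qpow (1/24) t * Pent t)) UNIV"
  proof -
    have "((\<lambda>k. pg (- k) t) has_sum Pent t) UNIV"
      using pg_has_sum[OF assms(1)] reindex_uminus[where f = "\<lambda>k. pg k t"] by simp
    from has_sum_cmult_right[OF this, of "qpow (1/24) t"]
    show ?thesis
    proof (rule has_sum_cong[THEN iffD1, rotated])
      fix k :: int
      show "qpow (1/24) t * pg (- k) t = f (3 * k)"
        unfolding f_def pg_def qpowt_NN
        by (rule NN_int[where k = "- k * (j + 1)"]) (simp_all add: j field_simps power2_eq_square)
    qed
  qed
  have b: "((\<lambda>k. f (3 * k + 1)) has_sum 0) UNIV"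
  proof -
    define h where "h = (\<lambda>k. f (3 * k + 1))"
    have hs: "h summable_on UNIV"
    proof -
      have eq: "h = (\<lambda>k. NN (of_int \<sigma> * (3 * of_int k + 1) / 6) (3/2 * of_int k ^ 2 + 3/2 * of_int k + 3/8) t)"
        unfolding h_def f_def by (intro ext NN_int[where k = 0]) (simp_all add: field_simps power2_eq_square)
      show ?thesis unfolding eq by (rule NN_summable[OF assms(1)]) simp
    qed
    define S where "S = infsum h UNIV"
    have hS: "(h has_sum S) UNIV" unfolding S_def using hs by (rule has_sum_infsum)
    then have "((\<lambda>k. h (- k - 1)) has_sum S) UNIV" by (simp only: reindex_neg1)
    moreover have "h (- k - 1) = - h k" for k
      unfolding h_def f_def
      by (rule NN_half[where k = "- 2 * j * k - j - k - 1"]) (simp_all add: j field_simps power2_eq_square)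
    ultimately have "((\<lambda>k. - h k) has_sum S) UNIV" by simp
    then have "(h has_sum - S) UNIV" by (simp add: has_sum_uminus)
    with hS have "S = - S" by (rule has_sum_unique)
    then have "S = 0" by simp
    with hS show ?thesis unfolding h_def by simp
  qed
  have c: "((\<lambda>k. f (3 * k + 2)) has_sum (qpow (- of_int \<sigma> / 6) 1 * qpow (1/24) t * Pent t)) UNIV"
  proof -
    have "((\<lambda>k. pg (k + 1) t) has_sum Pent t) UNIV"
      using pg_has_sum[OF assms(1)] reindex_shift[where f = "\<lambda>k. pg k t" and c = 1] by simp
    from has_sum_cmult_right[OF this, of "qpow (- of_int \<sigma> / 6) 1 * qpow (1/24) t"]
    show ?thesis
    proof (rule has_sum_cong[THEN iffD1, rotated])
      fix k :: int
      show "qpow (- of_int \<sigma> / 6) 1 * qpow (1/24) t * pg (k + 1) t = f (3 * k + 2)"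
        unfolding f_def pg_def mult.assoc qpowt_NN qpow1_NN
        by (rule NN_int[where k = "- j * (k + 1)"]) (simp_all add: j field_simps power2_eq_square)
    qed
  qed
  have "(f has_sum (qpow (1/24) t * Pent t + 0 + qpow (- of_int \<sigma> / 6) 1 * qpow (1/24) t * Pent t)) UNIV"
    by (rule split3[OF a b c])
  moreover have "qpow (1/24) t * Pent t + 0 + qpow (- of_int \<sigma> / 6) 1 * qpow (1/24) t * Pent t
     = (1 + qpow (- of_int \<sigma> / 6) 1) * (qpow (1/24) t * Pent t)" by (simp add: distrib_right mult.assoc)
  ultimately show ?thesis unfolding f_def by simp
qed



lemma has_sum_pair_cong:
  "(\<And>n m. F n m = H n m) \<Longrightarrow> ((\<lambda>(n,m). F n m) has_sum s) A \<Longrightarrow> ((\<lambda>(n,m). H n m) has_sum s) A"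
  by (metis (no_types, lifting) has_sum_cong old.prod.case surj_pair)

lemma KX1:
  assumes "Im t > 0"
  shows "((\<lambda>s. NN (of_int s / 6) (1/6 * of_int s ^ 2 + 1/6 * of_int s + 1/24) t) has_sum
           ((1 + qpow (- 1 / 6) 1) * (qpow (1/24) t * Pent t))) UNIV"
  using KX[OF assms, of 1] by simp

lemma KXm:
  assumes "Im t > 0"
  shows "((\<lambda>s. NN (- of_int s / 6) (1/6 * of_int s ^ 2 + 1/6 * of_int s + 1/24) t) has_sum
           ((1 + qpow (1 / 6) 1) * (qpow (1/24) t * Pent t))) UNIV"
  using KX[OF assms, of "-1"] by simp

lemma qpow_cis: "qpow a 1 = cis (2 * pi * a)"
  unfolding qpow_def cis_conv_exp by (rule arg_cong[where f = exp]) simp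

lemma three: "(1 + qpow (- 1 / 6) 1) * (1 + qpow (1 / 6) 1) = 3"
proof -
  have a: "qpow (- 1 / 6) 1 = cis (- (pi / 3))" unfolding qpow_cis by (simp add: field_simps)
  have b: "qpow (1 / 6) 1 = cis (pi / 3)" unfolding qpow_cis by (simp add: field_simps)
  show ?thesis unfolding a b by (simp add: complex_eq_iff cos_60 sin_60 algebra_simps)
qed

lemma XY:
  assumes "Im t > 0"
  shows "((\<lambda>(u,v). NN (of_int u / 6) (1/6 * of_int u ^ 2 + 1/6 * of_int u + 1/24) t
                 * NN (- of_int v / 6) (1/6 * of_int v ^ 2 + 1/6 * of_int v + 1/24) t)
          has_sum (3 * qpow (1/12) t * (Pent t * Pent t))) UNIV"
proof -
  have "((\<lambda>(u,v). NN (of_int u / 6) (1/6 * of_int u ^ 2 + 1/6 * of_int u + 1/24) t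
                 * NN (- of_int v / 6) (1/6 * of_int v ^ 2 + 1/6 * of_int v + 1/24) t)
          has_sum (((1 + qpow (- 1 / 6) 1) * (qpow (1/24) t * Pent t)) * ((1 + qpow (1 / 6) 1) * (qpow (1/24) t * Pent t)))) UNIV"
    using has_sum_prod_abs[OF nsum[OF assms] nsum[OF assms] KX1[OF assms] KXm[OF assms]] by simp
  moreover have "((1 + qpow (- 1 / 6) 1) * (qpow (1/24) t * Pent t)) * ((1 + qpow (1 / 6) 1) * (qpow (1/24) t * Pent t))
      = 3 * qpow (1/12) t * (Pent t * Pent t)"
  proof -
    have qq: "qpow (1/24) t * qpow (1/24) t = qpow (1/12) t" unfolding qpow_add by simp
    have "((1 + qpow (- 1 / 6) 1) * (qpow (1/24) t * Pent t)) * ((1 + qpow (1 / 6) 1) * (qpow (1/24) t * Pent t))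
      = ((1 + qpow (- 1 / 6) 1) * (1 + qpow (1 / 6) 1)) * (qpow (1/24) t * qpow (1/24) t) * (Pent t * Pent t)"
      by (simp only: mult_ac)
    also have "\<dots> = 3 * qpow (1/12) t * (Pent t * Pent t)" by (simp only: three qq)
    finally show ?thesis .
  qed
  ultimately show ?thesis by (simp only:)
qed

lemma id3:
  assumes "Im t > 0"
  shows "theta3 0 (2 * t / 3) * theta2 (1/3) (2 * t / 3) + theta2 0 (2 * t / 3) * theta3 (1/3) (2 * t / 3)
           = 3 * (dedekind_eta t)^2"
proof -
  define D where "D = (\<lambda>(u::int, v::int). NN (of_int u / 6) (1/6 * of_int u ^ 2 + 1/6 * of_int u + 1/24) t
                 * NN (- of_int v / 6) (1/6 * of_int v ^ 2 + 1/6 * of_int v + 1/24) t)"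
  note P1 = prodT[OF assms _ _ T3a[OF assms] T3b[OF assms]]
  note P2 = prodT[OF assms _ _ T3c[OF assms] T3d[OF assms]]
  have "((\<lambda>(n,m). D (n + m, n - m - 1)) has_sum (theta3 0 (2 * t / 3) * theta2 (1/3) (2 * t / 3))) UNIV"
    by (rule has_sum_pair_cong[OF _ P1], unfold D_def prod.case NN_mult, rule NN_int[where k = 0])
       (simp_all add: field_simps power2_eq_square)
  then have O: "(D has_sum (theta3 0 (2 * t / 3) * theta2 (1/3) (2 * t / 3))) Od" by (simp only: reindex_Od3)
  have "((\<lambda>(n,m). D (n + m, n - m)) has_sum (theta2 0 (2 * t / 3) * theta3 (1/3) (2 * t / 3))) UNIV"
    by (rule has_sum_pair_cong[OF _ P2], unfold D_def prod.case NN_mult, rule NN_int[where k = 0])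
       (simp_all add: field_simps power2_eq_square)
  then have E: "(D has_sum (theta2 0 (2 * t / 3) * theta3 (1/3) (2 * t / 3))) Ev" by (simp only: reindex_Ev3)
  have "(D has_sum (theta2 0 (2 * t / 3) * theta3 (1/3) (2 * t / 3) + theta3 0 (2 * t / 3) * theta2 (1/3) (2 * t / 3))) UNIV"
    by (rule has_sum_parity[OF E O])
  moreover have "(D has_sum (3 * qpow (1/12) t * (Pent t * Pent t))) UNIV"
    unfolding D_def by (rule XY[OF assms])
  ultimately have "theta2 0 (2 * t / 3) * theta3 (1/3) (2 * t / 3) + theta3 0 (2 * t / 3) * theta2 (1/3) (2 * t / 3)
     = 3 * qpow (1/12) t * (Pent t * Pent t)" by (rule has_sum_unique)
  moreover have "3 * (dedekind_eta t)^2 = 3 * qpow (1/12) t * (Pent t * Pent t)"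
  proof -
    have "3 * (dedekind_eta t)^2 = 3 * (qpow (1/24) t * qpow (1/24) t) * (Pent t * Pent t)"
      unfolding eta_eq[OF assms] by (simp add: power2_eq_square mult_ac)
    also have "qpow (1/24) t * qpow (1/24) t = qpow (1/12) t" unfolding qpow_add by simp
    finally show ?thesis .
  qed
  ultimately show ?thesis by (simp add: add.commute)
qed



lemma id2:
  assumes "Im t > 0"
  shows "theta3 0 (t / 6) * theta3 (1/6) (t / 6) - theta4 0 (t / 6) * theta4 (1/6) (t / 6)
           = 6 * (dedekind_eta t)^2"
proof -
  define D where "D = (\<lambda>(u::int, v::int). NN (of_int u / 6) (1/6 * of_int u ^ 2 + 1/6 * of_int u + 1/24) t
                 * NN (- of_int v / 6) (1/6 * of_int v ^ 2 + 1/6 * of_int v + 1/24) t)"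
  define F1 where "F1 = (\<lambda>n m. NN 0 (1/12 * of_int n ^ 2 + 0 * of_int n + 0) t * NN (of_int m / 6) (1/12 * of_int m ^ 2 + 0 * of_int m + 0) t)"
  define F2 where "F2 = (\<lambda>n m. NN (of_int n / 2) (1/12 * of_int n ^ 2 + 0 * of_int n + 0) t * NN (of_int m / 2 + of_int m / 6) (1/12 * of_int m ^ 2 + 0 * of_int m + 0) t)"
  define K where "K = (\<lambda>(n, m). F1 n m - F2 n m)"
  have P1: "((\<lambda>(n, m). F1 n m) has_sum (theta3 0 (t / 6) * theta3 (1/6) (t / 6))) UNIV"
    unfolding F1_def by (rule prodT[OF assms _ _ T2a[OF assms] T2b[OF assms]]) auto
  have P2: "((\<lambda>(n, m). F2 n m) has_sum (theta4 0 (t / 6) * theta4 (1/6) (t / 6))) UNIV"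
    unfolding F2_def by (rule prodT[OF assms _ _ T2c[OF assms] T2d[OF assms]]) auto
  have "(K has_sum (theta3 0 (t / 6) * theta3 (1/6) (t / 6) + - (theta4 0 (t / 6) * theta4 (1/6) (t / 6)))) UNIV"
    using has_sum_add[OF P1 has_sum_neg[OF P2]] unfolding K_def by (simp add: case_prod_unfold)
  moreover have "(K has_sum (0 + 2 * (3 * qpow (1/12) t * (Pent t * Pent t)))) UNIV"
  proof (rule has_sum_parity)
    show "(K has_sum 0) Ev"
    proof (rule has_sum_0)
      fix x assume "x \<in> Ev"
      then obtain n m where x: "x = (n, m)" and e: "even (n + m)" by (cases x) (auto simp: Ev_def)
      from e have "n + m = 2 * ((n + m) div 2)" by presburger
      then have r: "real_of_int n + of_int m = 2 * of_int ((n + m) div 2)" by (metis of_int_add of_int_mult of_int_numeral)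
      have "F1 n m = F2 n m"
        unfolding F1_def F2_def NN_mult
        by (rule NN_int[where k = "- ((n + m) div 2)"]) (use r in \<open>simp_all add: field_simps\<close>)
      then show "K x = 0" unfolding x K_def by simp
    qed
    have "((\<lambda>(u,v). 2 * D (u, v)) has_sum (2 * (3 * qpow (1/12) t * (Pent t * Pent t)))) UNIV"
      using has_sum_cmult_right[OF XY[OF assms], of 2] unfolding D_def by (simp add: case_prod_unfold)
    moreover have "2 * D (u, v) = K (u + v + 1, u - v)" for u v
    proof -
      have a: "F1 (u + v + 1) (u - v) = D (u, v)"
        unfolding F1_def D_def prod.case NN_mult
        by (rule NN_int[where k = 0]) (simp_all add: field_simps power2_eq_square)
      have b: "F2 (u + v + 1) (u - v) = - D (u, v)"
        unfolding F2_def D_def prod.case NN_mult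
        by (rule NN_half[where k = u]) (simp_all add: field_simps power2_eq_square)
      show ?thesis unfolding K_def prod.case a b by simp
    qed
    ultimately have "((\<lambda>(u,v). K (u + v + 1, u - v)) has_sum (2 * (3 * qpow (1/12) t * (Pent t * Pent t)))) UNIV"
      by simp
    then show "(K has_sum (2 * (3 * qpow (1/12) t * (Pent t * Pent t)))) Od" by (simp only: reindex_Od1)
  qed
  ultimately have "theta3 0 (t / 6) * theta3 (1/6) (t / 6) + - (theta4 0 (t / 6) * theta4 (1/6) (t / 6))
     = 0 + 2 * (3 * qpow (1/12) t * (Pent t * Pent t))" by (rule has_sum_unique)
  moreover have "6 * (dedekind_eta t)^2 = 2 * (3 * qpow (1/12) t * (Pent t * Pent t))"
  proof -
    have "6 * (dedekind_eta t)^2 = 6 * (qpow (1/24) t * qpow (1/24) t) * (Pent t * Pent t)"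
      unfolding eta_eq[OF assms] by (simp add: power2_eq_square mult_ac)
    also have "qpow (1/24) t * qpow (1/24) t = qpow (1/12) t" unfolding qpow_add by simp
    finally show ?thesis by simp
  qed
  ultimately show ?thesis by simp
qed


theorem lemma130:
  fixes \<tau> :: complex
  assumes "Im \<tau> > 0"
  shows "theta3 0 (6 * \<tau>) * theta3 \<tau> (6 * \<tau>) - theta2 0 (6 * \<tau>) * theta2 \<tau> (6 * \<tau>)
           = qpow (-1/12) \<tau> * (dedekind_eta \<tau>)^2
    \<and> theta3 0 (\<tau> / 6) * theta3 (1/6) (\<tau> / 6) - theta4 0 (\<tau> / 6) * theta4 (1/6) (\<tau> / 6)
           = 6 * (dedekind_eta \<tau>)^2
    \<and> theta3 0 (2 * \<tau> / 3) * theta2 (1/3) (2 * \<tau> / 3) + theta2 0 (2 * \<tau> / 3) * theta3 (1/3) (2 * \<tau> / 3)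
           = 3 * (dedekind_eta \<tau>)^2
    \<and> theta3 0 (3 * \<tau> / 2) * theta4 \<tau> (3 * \<tau> / 2) - theta4 0 (3 * \<tau> / 2) * theta3 \<tau> (3 * \<tau> / 2)
           = -2 * qpow (-1/3) \<tau> * (dedekind_eta \<tau>)^2"
    using id1[OF assms] id2[OF assms] id3[OF assms] id4[OF assms] by blast

end
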